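(* Let $K\subset M^{3\times3}$ be a three-dimensional subspace without Rank-$1$ connections. Then there exists $\beta\in\mathbb{R}^{q_0}\setminus\{0\}$ with $\sum_{k=1}^{q_0}\beta_kM_k(X)\ge0$ for all $X\in K$ and $\sum_k\beta_kM_k\not\equiv0$ on $K$, where $M_1,\dots,M_{q_0}$ are all the $2\times2$ minors of $3\times3$ matrices.
   Context: A set has Rank-$1$ connections if it contains $A\ne B$ with $\mathrm{Rank}(A-B)=1$. *)

theory Defs
  imports "HOL-Analysis.Analysis"
begin

definition has_rank1_connections :: "(real^3^3) set \<Rightarrow> bool" where
  "has_rank1_connections S \<longleftrightarrow> (\<exists>A\<in>S. \<exists>B\<in>S. A \<noteq> B \<and> rank (A - B) = 1)"

text \<open>Index set of the 2x2 minors of a 3x3 matrix: a pair of rows i1 < i2 and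
  a pair of columns j1 < j2 (there are q0 = 9 of them).\<close>
definition minor_idx :: "((3 \<times> 3) \<times> (3 \<times> 3)) set" where
  "minor_idx = {((i1, i2), (j1, j2)). i1 < i2 \<and> j1 < j2}"

definition minor2 :: "((3 \<times> 3) \<times> (3 \<times> 3)) \<Rightarrow> real^3^3 \<Rightarrow> real" where
  "minor2 idx X = (case idx of ((i1, i2), (j1, j2)) \<Rightarrow>
      X $ i1 $ j1 * X $ i2 $ j2 - X $ i1 $ j2 * X $ i2 $ j1)"

end

theory Submission
  imports Defs "HOL-Analysis.Analysis"
begin

unbundle cross3_syntax


lemma triple_cross: "x \<times> (y \<times> z) = (x \<bullet> z) *\<^sub>R y - (x \<bullet> y) *\<^sub>R z" for x y z :: "real^3"
  by (simp add: cross3_def inner_vec_def sum_3 vec_eq_iff forall_3 algebra_simps)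

lemma cross0_par:
  fixes x y :: "real^3"
  assumes "x \<times> y = 0" "y \<noteq> 0"
  shows "x = ((x \<bullet> y) / (y \<bullet> y)) *\<^sub>R y"
proof -
  have "y \<times> (x \<times> y) = 0" using assms by simp
  hence "(y \<bullet> y) *\<^sub>R x = (y \<bullet> x) *\<^sub>R y" by (simp add: triple_cross)
  moreover have "y \<bullet> y \<noteq> 0" using assms by simp
  ultimately show ?thesis
    by (metis (no_types, lifting) divide_inverse_commute inner_commute scaleR_scaleR
        eq_vector_fraction_iff)
qed

lemma cross0_ex:
  fixes x y :: "real^3"
  assumes "x \<times> y = 0" "y \<noteq> 0"
  shows "\<exists>c. x = c *\<^sub>R y"
  using cross0_par[OF assms] by blast

lemma perp_par:
  fixes x v w :: "real^3"
  assumes "x \<bullet> v = 0" "x \<bullet> w = 0"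
  shows "x \<times> (v \<times> w) = 0"
  using assms by (simp add: triple_cross)

lemma cubic_root: "\<exists>x::real. x^3 + a*x^2 + b*x + c = 0"
proof -
  define B where "B = 1 + \<bar>a\<bar> + \<bar>b\<bar> + \<bar>c\<bar>"
  have B1: "B \<ge> 1" unfolding B_def by simp
  have "B^3 + a*B^2 + b*B + c \<ge> B^3 - \<bar>a\<bar>*B^2 - \<bar>b\<bar>*B^2 - \<bar>c\<bar>*B^2"
  proof -
    have "a*B^2 \<ge> -\<bar>a\<bar>*B^2" by (rule mult_right_mono) auto
    moreover have "b*B \<ge> -\<bar>b\<bar>*B^2"
    proof -
      have "b*B \<ge> -\<bar>b\<bar>*B" by (rule mult_right_mono) (use B1 in auto)
      moreover have "\<bar>b\<bar>*B \<le> \<bar>b\<bar>*B^2" using B1 by (simp add: mult_left_mono power2_eq_square)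
      ultimately show ?thesis by linarith
    qed
    moreover have "c \<ge> -\<bar>c\<bar>*B^2"
    proof -
      have "1 \<le> B^2" using B1 by (simp add: one_le_power)
      hence "\<bar>c\<bar> \<le> \<bar>c\<bar>*B^2" by (simp add: mult_le_cancel_left1)
      thus ?thesis by linarith
    qed
    ultimately show ?thesis by linarith
  qed
  moreover have "B^3 - \<bar>a\<bar>*B^2 - \<bar>b\<bar>*B^2 - \<bar>c\<bar>*B^2 = B^2 * (B - \<bar>a\<bar> - \<bar>b\<bar> - \<bar>c\<bar>)" by (simp add: algebra_simps power3_eq_cube power2_eq_square)
  moreover have "B^2 * (B - \<bar>a\<bar> - \<bar>b\<bar> - \<bar>c\<bar>) = B^2" unfolding B_def by simp
  moreover have "B^2 \<ge> 0" by simp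
  ultimately have up: "B^3 + a*B^2 + b*B + c \<ge> 0" by linarith
  have "(-B)^3 + a*(-B)^2 + b*(-B) + c \<le> (- (B^3)) + \<bar>a\<bar>*B^2 + \<bar>b\<bar>*B^2 + \<bar>c\<bar>*B^2"
  proof -
    have "a*B^2 \<le> \<bar>a\<bar>*B^2" by (rule mult_right_mono) auto
    moreover have "-b*B \<le> \<bar>b\<bar>*B^2"
    proof -
      have "-b*B \<le> \<bar>b\<bar>*B" by (rule mult_right_mono) (use B1 in auto)
      moreover have "\<bar>b\<bar>*B \<le> \<bar>b\<bar>*B^2" using B1 by (simp add: mult_left_mono power2_eq_square)
      ultimately show ?thesis by linarith
    qed
    moreover have "c \<le> \<bar>c\<bar>*B^2"
    proof -
      have "1 \<le> B^2" using B1 by (simp add: one_le_power)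
      hence "\<bar>c\<bar> \<le> \<bar>c\<bar>*B^2" by (simp add: mult_le_cancel_left1)
      thus ?thesis by linarith
    qed
    ultimately show ?thesis by (simp add: power3_eq_cube power2_eq_square)
  qed
  also have "\<dots> = - (B^2 * (B - \<bar>a\<bar> - \<bar>b\<bar> - \<bar>c\<bar>))" by (simp add: algebra_simps power3_eq_cube power2_eq_square)
  also have "\<dots> = - (B^2)" unfolding B_def by simp
  finally have lo: "(-B)^3 + a*(-B)^2 + b*(-B) + c \<le> 0" by (smt (verit) zero_le_power2)
  have "\<exists>x\<ge>-B. x \<le> B \<and> x^3 + a*x^2 + b*x + c = 0"
    by (rule IVT[of "\<lambda>x. x^3 + a*x^2 + b*x + c"]) (use up lo B1 in \<open>auto intro!: continuous_intros\<close>)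
  thus ?thesis by blast
qed

lemma det0_ker:
  fixes A :: "real^'n^'n"
  assumes "det A = 0"
  shows "\<exists>v. v \<noteq> 0 \<and> A *v v = 0"
proof -
  have "\<not> inj ((*v) A)"
    using det_nz_iff_inj[of "(*v) A"] assms by (simp add: matrix_of_matrix_vector_mul)
  then obtain x y where "x \<noteq> y" "A *v x = A *v y" unfolding inj_def by blast
  thus ?thesis by (intro exI[of _ "x - y"]) (simp add: matrix_vector_mult_diff_distrib)
qed

lemma eigen3:
  fixes M :: "real^3^3"
  shows "\<exists>v l. v \<noteq> 0 \<and> M *v v = l *\<^sub>R v"
proof -
  obtain x where x: "x^3 + (-(M$1$1+M$2$2+M$3$3))*x^2
     + (M$1$1*M$2$2 - M$1$2*M$2$1 + M$1$1*M$3$3 - M$1$3*M$3$1 + M$2$2*M$3$3 - M$2$3*M$3$2)*x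
     + (- det M) = 0"
    using cubic_root by blast
  have "det (M - x *\<^sub>R mat 1) = - (x^3 + (-(M$1$1+M$2$2+M$3$3))*x^2
     + (M$1$1*M$2$2 - M$1$2*M$2$1 + M$1$1*M$3$3 - M$1$3*M$3$1 + M$2$2*M$3$3 - M$2$3*M$3$2)*x
     + (- det M))"
    by (simp add: det_3 mat_def power3_eq_cube power2_eq_square algebra_simps)
  with x have "det (M - x *\<^sub>R mat 1) = 0" by simp
  then obtain v where "v \<noteq> 0" "(M - x *\<^sub>R mat 1) *v v = 0" using det0_ker by blast
  hence "M *v v = x *\<^sub>R v"
    by (simp add: matrix_vector_mult_diff_rdistrib matrix_vector_mul_lid matrix_scaleR_vector_ac
        flip: scaleR_matrix_vector_assoc)
  thus ?thesis using \<open>v \<noteq> 0\<close> by blast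
qed



lemma cross_pair_zero:
  fixes F H :: "real^3^3"
  shows "\<exists>t. t \<noteq> 0 \<and> (F *v t) \<times> (H *v t) = 0"
proof (cases "det F = 0")
  case True
  then obtain v where v: "v \<noteq> 0" "F *v v = 0" using det0_ker by blast
  show ?thesis by (rule exI[of _ v]) (simp add: v)
next
  case False
  then obtain G where G: "G ** F = mat 1" "F ** G = mat 1"
    using invertible_det_nz[of F] unfolding invertible_def by blast
  obtain v l where v: "v \<noteq> 0" "(G ** H) *v v = l *\<^sub>R v" using eigen3 by blast
  have "F *v ((G ** H) *v v) = ((F ** G) ** H) *v v"
    by (simp only: matrix_vector_mul_assoc matrix_mul_assoc)
  hence "H *v v = F *v ((G ** H) *v v)" by (simp add: G)
  also have "\<dots> = l *\<^sub>R (F *v v)" by (simp add: v(2) matrix_vector_mult_scaleR)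
  finally show ?thesis using v(1) by (intro exI[of _ v]) (simp add: cross_mult_right)
qed

lemma sym_inner:
  fixes S :: "real^'n^'n"
  assumes "transpose S = S"
  shows "(S *v a) \<bullet> b = a \<bullet> (S *v b)"
proof -
  have "a \<bullet> (S *v b) = (a v* S) \<bullet> b" by (simp add: dot_lmul_matrix)
  also have "\<dots> = (transpose S *v a) \<bullet> b" by (simp add: transpose_matrix_vector)
  finally show ?thesis using assms by simp
qed

lemma cramer3:
  fixes v w u z :: "real^3"
  shows "((v \<times> w) \<bullet> u) *\<^sub>R z = (z \<bullet> (w \<times> u)) *\<^sub>R v + (z \<bullet> (u \<times> v)) *\<^sub>R w + (z \<bullet> (v \<times> w)) *\<^sub>R u"
  by (simp add: cross3_def inner_vec_def sum_3 vec_eq_iff forall_3 algebra_simps)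

lemma perp2_par:
  fixes z v w :: "real^3"
  assumes "z \<bullet> v = 0" "z \<bullet> w = 0" "v \<times> w \<noteq> 0"
  shows "\<exists>c. z = c *\<^sub>R (v \<times> w)"
  using cross0_ex[OF perp_par[OF assms(1,2)] assms(3)] .

lemma posdef_inj:
  fixes Q :: "real^'n^'n"
  assumes "\<forall>x. x \<noteq> 0 \<longrightarrow> x \<bullet> (Q *v x) > 0" "Q *v x = Q *v y"
  shows "x = y"
proof (rule ccontr)
  assume "x \<noteq> y"
  hence "x - y \<noteq> 0" by simp
  hence "(x - y) \<bullet> (Q *v (x - y)) > 0" using assms(1) by blast
  moreover have "Q *v (x - y) = 0" using assms(2) by (simp add: matrix_vector_mult_diff_distrib)
  ultimately show False by simp
qed

lemma posdef_surj:
  fixes Q :: "real^'n^'n"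
  assumes "\<forall>x. x \<noteq> 0 \<longrightarrow> x \<bullet> (Q *v x) > 0"
  shows "\<exists>x. Q *v x = y"
proof -
  have "det Q \<noteq> 0"
  proof
    assume "det Q = 0"
    then obtain v where "v \<noteq> 0" "Q *v v = 0" using det0_ker by blast
    thus False using assms by force
  qed
  then obtain G where G: "Q ** G = mat 1" using invertible_det_nz[of Q] unfolding invertible_def by blast
  have "Q *v (G *v y) = y" by (simp only: matrix_vector_mul_assoc G matrix_vector_mul_lid)
  thus ?thesis by blast
qed

lemma common_eig:
  fixes Q M N :: "real^3^3"
  assumes Qs: "transpose Q = Q" and Qp: "\<forall>x. x \<noteq> 0 \<longrightarrow> x \<bullet> (Q *v x) > 0"
    and sM: "transpose (Q ** M) = Q ** M" and sN: "transpose (Q ** N) = Q ** N"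
    and cMN: "M ** N = N ** M"
  shows "\<exists>x. x \<noteq> 0 \<and> (\<exists>a. M *v x = a *\<^sub>R x) \<and> (\<exists>b. N *v x = b *\<^sub>R x)"
proof -
  obtain v m where v: "v \<noteq> 0" "M *v v = m *\<^sub>R v" using eigen3 by blast
  define w where "w = N *v v"
  define u where "u = N *v w"
  have Mw: "M *v w = m *\<^sub>R w"
  proof -
    have "M *v w = (M ** N) *v v" by (simp add: w_def matrix_vector_mul_assoc)
    also have "\<dots> = N *v (M *v v)" by (simp add: cMN matrix_vector_mul_assoc)
    finally show ?thesis by (simp add: v(2) matrix_vector_mult_scaleR w_def)
  qed
  have Mu: "M *v u = m *\<^sub>R u"
  proof -
    have "M *v u = (M ** N) *v w" by (simp add: u_def matrix_vector_mul_assoc)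
    also have "\<dots> = N *v (M *v w)" by (simp add: cMN matrix_vector_mul_assoc)
    finally show ?thesis by (simp add: Mw matrix_vector_mult_scaleR u_def)
  qed
  show ?thesis
  proof (cases "v \<times> w = 0")
    case True
    hence "w \<times> v = 0" by (metis cross_skew neg_equal_0_iff_equal)
    then obtain c where "w = c *\<^sub>R v" using cross0_ex v(1) by blast
    thus ?thesis using v by (intro exI[of _ v]) (auto simp: w_def)
  next
    case vw: False
    show ?thesis
    proof (cases "(v \<times> w) \<bullet> u = 0")
      case False
      obtain x n where x: "x \<noteq> 0" "N *v x = n *\<^sub>R x" using eigen3 by blast
      have "((v \<times> w) \<bullet> u) *\<^sub>R (M *v x) = M *v (((v \<times> w) \<bullet> u) *\<^sub>R x)"
        by (simp add: matrix_vector_mult_scaleR)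
      also have "\<dots> = M *v ((x \<bullet> (w \<times> u)) *\<^sub>R v + (x \<bullet> (u \<times> v)) *\<^sub>R w + (x \<bullet> (v \<times> w)) *\<^sub>R u)"
        by (simp only: cramer3)
      also have "\<dots> = m *\<^sub>R ((x \<bullet> (w \<times> u)) *\<^sub>R v + (x \<bullet> (u \<times> v)) *\<^sub>R w + (x \<bullet> (v \<times> w)) *\<^sub>R u)"
        by (simp add: matrix_vector_right_distrib matrix_vector_mult_scaleR v(2) Mw Mu algebra_simps)
      also have "\<dots> = m *\<^sub>R (((v \<times> w) \<bullet> u) *\<^sub>R x)" by (simp only: cramer3)
      also have "\<dots> = ((v \<times> w) \<bullet> u) *\<^sub>R (m *\<^sub>R x)" by simp
      finally have "M *v x = m *\<^sub>R x" using False by (simp only: scaleR_cancel_left) simp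
      thus ?thesis using x by blast
    next
      case True
      obtain x where x: "Q *v x = v \<times> w" using posdef_surj[OF Qp] by blast
      have x0: "x \<noteq> 0" using x vw by auto
      have key: "\<exists>c. K *v x = c *\<^sub>R x"
        if K: "transpose (Q ** K) = Q ** K" "((Q ** K) *v x) \<bullet> v = 0" "((Q ** K) *v x) \<bullet> w = 0" for K
      proof -
        obtain c where "(Q ** K) *v x = c *\<^sub>R (v \<times> w)" using perp2_par[OF K(2,3) vw] by blast
        hence "Q *v (K *v x) = Q *v (c *\<^sub>R x)"
          by (simp add: matrix_vector_mul_assoc matrix_vector_mult_scaleR x)
        hence "K *v x = c *\<^sub>R x" using posdef_inj[OF Qp] by blast
        thus ?thesis by blast
      qed
      have Qx: "(Q *v x) \<bullet> y = x \<bullet> (Q *v y)" for y using sym_inner[OF Qs] .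
      have "\<exists>a. M *v x = a *\<^sub>R x"
      proof (rule key[OF sM])
        have "((Q ** M) *v x) \<bullet> v = x \<bullet> ((Q ** M) *v v)" using sym_inner[OF sM] .
        also have "\<dots> = m * ((Q *v x) \<bullet> v)"
          by (simp add: Qx flip: matrix_vector_mul_assoc add: v(2) matrix_vector_mult_scaleR)
        finally show "((Q ** M) *v x) \<bullet> v = 0" by (simp add: x dot_cross_self)
        have "((Q ** M) *v x) \<bullet> w = x \<bullet> ((Q ** M) *v w)" using sym_inner[OF sM] .
        also have "\<dots> = m * ((Q *v x) \<bullet> w)"
          by (simp add: Qx flip: matrix_vector_mul_assoc add: Mw matrix_vector_mult_scaleR)
        finally show "((Q ** M) *v x) \<bullet> w = 0" by (simp add: x dot_cross_self)
      qed
      moreover have "\<exists>b. N *v x = b *\<^sub>R x"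
      proof (rule key[OF sN])
        have "((Q ** N) *v x) \<bullet> v = x \<bullet> ((Q ** N) *v v)" using sym_inner[OF sN] .
        also have "\<dots> = (Q *v x) \<bullet> w"
          by (simp add: Qx flip: matrix_vector_mul_assoc add: w_def)
        finally show "((Q ** N) *v x) \<bullet> v = 0" by (simp add: x dot_cross_self)
        have "((Q ** N) *v x) \<bullet> w = x \<bullet> ((Q ** N) *v w)" using sym_inner[OF sN] .
        also have "\<dots> = (Q *v x) \<bullet> u"
          by (simp add: Qx flip: matrix_vector_mul_assoc add: u_def)
        finally show "((Q ** N) *v x) \<bullet> w = 0" by (simp add: x True)
      qed
      ultimately show ?thesis using x0 by blast
    qed
  qed
qed



lemma tr_add: "transpose (A + B) = transpose A + transpose (B::real^'n^'m)"
  by (simp add: transpose_def vec_eq_iff)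
lemma mm_radd: "(A + B) ** C = A ** C + B ** (C::real^'k^'n)" for A B :: "real^'n^'m"
  by (simp add: matrix_matrix_mult_def vec_eq_iff sum.distrib algebra_simps)
lemma mm_lscale: "(c *\<^sub>R A) ** B = c *\<^sub>R (A ** B)" for A :: "real^'n^'m" and B :: "real^'k^'n"
  by (simp add: matrix_matrix_mult_def vec_eq_iff sum_distrib_left algebra_simps)
lemma mm_rscale: "A ** (c *\<^sub>R B) = c *\<^sub>R (A ** B)" for A :: "real^'n^'m" and B :: "real^'k^'n"
  by (simp add: matrix_matrix_mult_def vec_eq_iff sum_distrib_left algebra_simps)

definition Rm :: "(3 \<Rightarrow> real^3^3) \<Rightarrow> real^3 \<Rightarrow> real^3^3" where
  "Rm R c = (\<Sum>a\<in>UNIV. c$a *\<^sub>R R a)"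

lemma Rm3: "Rm R c = c$1 *\<^sub>R R 1 + c$2 *\<^sub>R R 2 + c$3 *\<^sub>R R 3"
  by (simp add: Rm_def sum_3)

lemma Rm_add: "Rm R (c + d) = Rm R c + Rm R d"
  by (simp add: Rm3 algebra_simps)
lemma Rm_diff: "Rm R (c - d) = Rm R c - Rm R d"
  by (simp add: Rm3 algebra_simps)
lemma Rm_axis: "Rm R (axis a 1) = R a"
  using exhaust_3[of a] by (auto simp: Rm3 axis_def)

lemma Bf_sym:
  fixes R :: "3 \<Rightarrow> real^3^3" and P :: "real^3^3"
  assumes E: "\<And>a b. R a ** P ** transpose (R b) = R b ** P ** transpose (R a)"
  shows "Rm R d ** P ** transpose (Rm R e) = Rm R e ** P ** transpose (Rm R d)"
proof -
  define G where "G a b = R a ** P ** transpose (R b)" for a b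
  have g: "G 2 1 = G 1 2" "G 3 1 = G 1 3" "G 3 2 = G 2 3" unfolding G_def using E by auto
  have ex: "Rm R x ** P ** transpose (Rm R y) =
     (x$1*y$1) *\<^sub>R G 1 1 + (x$1*y$2) *\<^sub>R G 1 2 + (x$1*y$3) *\<^sub>R G 1 3 +
     (x$2*y$1) *\<^sub>R G 2 1 + (x$2*y$2) *\<^sub>R G 2 2 + (x$2*y$3) *\<^sub>R G 2 3 +
     (x$3*y$1) *\<^sub>R G 3 1 + (x$3*y$2) *\<^sub>R G 3 2 + (x$3*y$3) *\<^sub>R G 3 3" for x y
    unfolding Rm3 G_def
    by (simp add: mm_radd mm_lscale matrix_add_ldistrib mm_rscale tr_add transpose_scalar algebra_simps)
  show ?thesis unfolding ex g by (simp add: algebra_simps)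
qed

lemma det_triple: "det (A::real^3^3) = A$1 \<bullet> (A$2 \<times> A$3)"
  by (simp add: det_3 cross3_def inner_vec_def sum_3 algebra_simps)

lemma cof_id: "((A$2 \<times> A$3) \<bullet> z) *\<^sub>R A$1 + ((A$3 \<times> A$1) \<bullet> z) *\<^sub>R A$2 + ((A$1 \<times> A$2) \<bullet> z) *\<^sub>R A$3
   = det (A::real^3^3) *\<^sub>R z"
  by (simp add: det_3 cross3_def inner_vec_def sum_3 vec_eq_iff forall_3 algebra_simps)

lemma det_pm: "det (A + B) - det (A - B) = 2 * ((A$2 \<times> A$3) \<bullet> B$1 + (A$3 \<times> A$1) \<bullet> B$2 + (A$1 \<times> A$2) \<bullet> B$3) + 2 * det (B::real^3^3)"
  by (simp add: det_3 cross3_def inner_vec_def sum_3 algebra_simps)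

lemma mv_row: "(A *v x) $ i = A$i \<bullet> (x::real^'n)" for A :: "real^'n^'m"
  by (simp add: matrix_vector_mult_def inner_vec_def mult.commute)

lemma vm3: "x v* (A::real^3^3) = x$1 *\<^sub>R A$1 + x$2 *\<^sub>R A$2 + x$3 *\<^sub>R A$3"
  by (simp add: vector_matrix_mult_def vec_eq_iff sum_3 mult.commute)

lemma cross_comp:
  fixes x y :: "real^3"
  assumes "x \<times> y = 0"
  shows "x$a * y$b = x$b * y$a"
proof -
  have "x$2 * y$3 = x$3 * y$2" "x$3 * y$1 = x$1 * y$3" "x$1 * y$2 = x$2 * y$1"
    using assms by (simp_all add: cross3_def vec_eq_iff forall_3)
  thus ?thesis using exhaust_3[of a] exhaust_3[of b] by (auto simp: mult.commute)
qed

lemma pairwise_col: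
  fixes r :: "3 \<Rightarrow> real^3"
  assumes "\<And>a b. r a \<times> r b = 0"
  shows "\<exists>w. \<forall>a. \<exists>s. r a = s *\<^sub>R w"
proof (cases "\<exists>a. r a \<noteq> 0")
  case True
  then obtain a0 where a0: "r a0 \<noteq> 0" by blast
  show ?thesis
    by (rule exI[of _ "r a0"]) (use cross0_ex[OF assms a0] in blast)
next
  case False
  thus ?thesis by (intro exI[of _ 0]) auto
qed

lemma tail:
  fixes R :: "3 \<Rightarrow> real^3^3" and l :: "real^3"
  assumes l0: "l \<noteq> 0" and perp: "\<And>a t. l \<bullet> (R a *v t) = 0"
  shows "\<exists>t. t \<noteq> 0 \<and> (\<exists>w. \<forall>a. \<exists>s. R a *v t = s *\<^sub>R w)"
proof -
  obtain j where p0: "l \<times> axis j 1 \<noteq> 0" using cross_basis_nonzero[OF l0] by blast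
  define p where "p = l \<times> axis j 1"
  define q where "q = l \<times> p"
  define F where "F = (\<chi> a. p v* R a)"
  define H where "H = (\<chi> a. q v* R a)"
  obtain t where t: "t \<noteq> 0" "(F *v t) \<times> (H *v t) = 0" using cross_pair_zero by blast
  define r where "r a = R a *v t" for a
  have Fa: "(F *v t)$a = p \<bullet> r a" for a by (simp add: mv_row F_def r_def dot_lmul_matrix)
  have Ha: "(H *v t)$a = q \<bullet> r a" for a by (simp add: mv_row H_def r_def dot_lmul_matrix)
  have pl: "p \<bullet> l = 0" unfolding p_def by (simp add: dot_cross_self inner_commute)
  have pq: "p \<times> q = (p \<bullet> p) *\<^sub>R l" unfolding q_def by (simp add: triple_cross pl)
  have pp: "p \<bullet> p \<noteq> 0" using p0 p_def by simp
  have rr: "r a \<times> r b = 0" for a b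
  proof -
    have "(p \<bullet> r a) * (q \<bullet> r b) = (p \<bullet> r b) * (q \<bullet> r a)"
      using cross_comp[OF t(2), of a b] by (simp add: Fa Ha)
    hence "(p \<times> q) \<bullet> (r a \<times> r b) = 0" by (simp add: dot_cross)
    hence "(p \<bullet> p) * (l \<bullet> (r a \<times> r b)) = 0" by (simp add: pq)
    hence lr: "(r a \<times> r b) \<bullet> l = 0" using pp by (simp add: inner_commute)
    have "l \<times> (r a \<times> r b) = 0" by (rule perp_par) (simp_all add: r_def perp)
    hence "(r a \<times> r b) \<times> l = 0" by (metis cross_skew neg_equal_0_iff_equal)
    from cross0_par[OF this l0] lr show ?thesis by simp
  qed
  obtain w where "\<forall>a. \<exists>s. r a = s *\<^sub>R w" using pairwise_col[of r] rr by blast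
  thus ?thesis using t(1) unfolding r_def by blast
qed

lemma caseII:
  fixes R :: "3 \<Rightarrow> real^3^3" and P :: "real^3^3"
  assumes Pp: "\<forall>x. x \<noteq> 0 \<longrightarrow> x \<bullet> (P *v x) > 0"
    and E: "\<And>a b. R a ** P ** transpose (R b) = R b ** P ** transpose (R a)"
    and alldet: "\<And>d. det (Rm R d) = 0"
    and nonlow: "\<not> ((Rm R c)$2 \<times> (Rm R c)$3 = 0 \<and> (Rm R c)$3 \<times> (Rm R c)$1 = 0 \<and> (Rm R c)$1 \<times> (Rm R c)$2 = 0)"
  shows "\<exists>t. t \<noteq> 0 \<and> (\<exists>w. \<forall>a. \<exists>s. R a *v t = s *\<^sub>R w)"
proof -
  define A where "A = Rm R c"
  have dA: "det A = 0" using alldet A_def by simp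
  define c1 where "c1 = A$2 \<times> A$3"
  define c2 where "c2 = A$3 \<times> A$1"
  define c3 where "c3 = A$1 \<times> A$2"
  have cyc: "A$2 \<bullet> (A$3 \<times> A$1) = det A" "A$3 \<bullet> (A$1 \<times> A$2) = det A"
    by (simp_all add: det_triple cross3_def inner_vec_def sum_3 algebra_simps)
  define perpall where "perpall y \<longleftrightarrow> y \<bullet> A$1 = 0 \<and> y \<bullet> A$2 = 0 \<and> y \<bullet> A$3 = 0" for y
  have pc1: "perpall c1" "perpall c2" "perpall c3"
    unfolding perpall_def c1_def c2_def c3_def using dA cyc det_triple[of A]
    by (simp_all add: dot_cross_self inner_commute)
  have pcross: "y \<times> c1 = 0 \<and> y \<times> c2 = 0 \<and> y \<times> c3 = 0" if "perpall y" for y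
    using that unfolding perpall_def c1_def c2_def c3_def by (simp add: perp_par)
  obtain k where k: "k \<in> {c1, c2, c3}" "k \<noteq> 0" using nonlow unfolding A_def[symmetric] c1_def c2_def c3_def by blast
  have pk: "perpall k" using k pc1 by blast
  have ck: "y \<times> k = 0" if "perpall y" for y using pcross[OF that] k(1) by blast
  define l :: "real^3" where "l = vector [c1 \<bullet> k, c2 \<bullet> k, c3 \<bullet> k]"
  have kk: "k \<bullet> k \<noteq> 0" using k by simp
  have l0: "l \<noteq> 0"
  proof
    assume "l = 0"
    hence "c1 \<bullet> k = 0" "c2 \<bullet> k = 0" "c3 \<bullet> k = 0" unfolding l_def by (simp_all add: vec_eq_iff forall_3)
    thus False using k kk by auto
  qed
  have lA: "l v* A = 0"
    using cof_id[of A k] dA unfolding l_def c1_def c2_def c3_def by (simp add: vm3)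
  have cexp: "ci = ((ci \<bullet> k) / (k \<bullet> k)) *\<^sub>R k" if "perpall ci" for ci
    using cross0_par[OF ck[OF that] k(2)] .
  have lBk: "l \<bullet> (B *v k) = 0" if B: "B = R a" for B a
  proof -
    have "det (A + B) = 0" "det (A - B) = 0" "det B = 0"
      using alldet[of "c + axis a 1"] alldet[of "c - axis a 1"] alldet[of "axis a 1"]
      by (simp_all add: A_def B Rm_add Rm_diff Rm_axis)
    hence "c1 \<bullet> B$1 + c2 \<bullet> B$2 + c3 \<bullet> B$3 = 0" using det_pm[of A B]
      unfolding c1_def c2_def c3_def by simp
    hence "((c1 \<bullet> k) / (k \<bullet> k)) * (k \<bullet> B$1) + ((c2 \<bullet> k) / (k \<bullet> k)) * (k \<bullet> B$2)
        + ((c3 \<bullet> k) / (k \<bullet> k)) * (k \<bullet> B$3) = 0"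
      using cexp[OF pc1(1)] cexp[OF pc1(2)] cexp[OF pc1(3)]
      by (metis inner_scaleR_left)
    hence "((c1 \<bullet> k) * (k \<bullet> B$1) + (c2 \<bullet> k) * (k \<bullet> B$2) + (c3 \<bullet> k) * (k \<bullet> B$3)) / (k \<bullet> k) = 0"
      by (simp add: add_divide_distrib)
    hence "(c1 \<bullet> k) * (k \<bullet> B$1) + (c2 \<bullet> k) * (k \<bullet> B$2) + (c3 \<bullet> k) * (k \<bullet> B$3) = 0"
      using kk by simp
    thus ?thesis unfolding l_def by (simp add: inner_vec_def sum_3 mv_row algebra_simps)
  qed
  have zero: "l v* R a = 0" for a
  proof -
    define B where "B = R a"
    define z where "z = l v* B"
    have EAB: "A ** P ** transpose B = B ** P ** transpose A"
      using Bf_sym[of R P c "axis a 1", OF E] unfolding A_def B_def Rm_axis .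
    have "A *v (P *v z) = (A ** P ** transpose B) *v l"
      by (simp add: z_def flip: matrix_vector_mul_assoc)
    also have "\<dots> = (B ** P ** transpose A) *v l" by (simp only: EAB)
    also have "\<dots> = 0" by (simp add: lA flip: matrix_vector_mul_assoc)
    finally have Ay: "A *v (P *v z) = 0" .
    have "perpall (P *v z)" unfolding perpall_def using Ay
      by (simp add: vec_eq_iff mv_row forall_3 inner_commute)
    then obtain mu where mu: "P *v z = mu *\<^sub>R k" using cross0_ex[OF ck k(2)] by blast
    have "z \<bullet> k = l \<bullet> (B *v k)" by (simp add: z_def dot_lmul_matrix)
    also have "\<dots> = 0" using lBk B_def by simp
    finally have "z \<bullet> (P *v z) = 0" by (simp add: mu)
    hence "z = 0" using Pp by (metis less_irrefl)
    thus ?thesis by (simp add: z_def B_def)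
  qed
  have "l \<bullet> (R a *v t) = 0" for a t
    by (simp add: dot_lmul_matrix[symmetric] zero)
  thus ?thesis using tail[OF l0] by blast
qed

lemma caseIII:
  fixes R :: "3 \<Rightarrow> real^3^3"
  assumes low: "\<And>d i j. (Rm R d)$i \<times> (Rm R d)$j = 0"
    and inj: "\<And>t. (\<forall>a. R a *v t = 0) \<Longrightarrow> t = 0"
  shows "\<exists>t. t \<noteq> 0 \<and> (\<exists>w. \<forall>a. \<exists>s. R a *v t = s *\<^sub>R w)"
proof -
  obtain a0 where a0: "R a0 \<noteq> 0"
  proof (rule ccontr)
    assume "\<not> thesis"
    hence "\<forall>a. R a = 0" using that by blast
    hence "axis 1 1 = (0::real^3)" using inj[of "axis 1 1"] by simp
    thus False by (simp add: axis_eq_0_iff)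
  qed
  define A where "A = R a0"
  obtain i0 where i0: "A$i0 \<noteq> 0" using a0 unfolding A_def by (metis vec_eq_iff zero_index)
  define w where "w = A$i0"
  have lowA: "A$i \<times> A$j = 0" for i j using low[of "axis a0 1" i j] by (simp add: Rm_axis A_def)
  define u :: "real^3" where "u = (\<chi> i. (A$i \<bullet> w) / (w \<bullet> w))"
  have Ai: "A$i = u$i *\<^sub>R w" for i using cross0_par[OF lowA[of i i0]] i0 by (simp add: u_def w_def)
  have ww: "w \<bullet> w \<noteq> 0" using i0 w_def by simp
  have ui0: "u$i0 = 1" using ww by (simp add: u_def w_def)
  obtain j where x0: "w \<times> axis j 1 \<noteq> 0" using cross_basis_nonzero i0 w_def by blast
  define x where "x = w \<times> axis j 1"
  have wx: "w \<bullet> x = 0" by (simp add: x_def dot_cross_self)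
  have Bx: "\<exists>s. R b *v x = s *\<^sub>R u" for b
  proof -
    define B where "B = R b"
    have lowB: "B$i \<times> B$j = 0" for i j using low[of "axis b 1" i j] by (simp add: Rm_axis B_def)
    have lowAB: "(A$i + B$i) \<times> (A$j + B$j) = 0" for i j
      using low[of "axis a0 1 + axis b 1" i j] by (simp add: Rm_add Rm_axis A_def B_def)
    have rel: "u$i * (B$j \<bullet> x) = u$j * (B$i \<bullet> x)" for i j
    proof -
      have "A$i \<times> B$j + B$i \<times> A$j = 0" using lowAB[of i j] lowA[of i j] lowB[of i j]
        by (simp add: cross_add_left cross_add_right add.commute)
      hence "u$i *\<^sub>R (w \<times> B$j) - u$j *\<^sub>R (w \<times> B$i) = 0"
        by (simp add: Ai cross_mult_left cross_mult_right cross_skew[of "B$i" w])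
      hence "(u$i *\<^sub>R (w \<times> B$j) - u$j *\<^sub>R (w \<times> B$i)) \<bullet> (w \<times> x) = 0" by simp
      hence h: "u$i * ((w \<times> B$j) \<bullet> (w \<times> x)) - u$j * ((w \<times> B$i) \<bullet> (w \<times> x)) = 0"
        by (simp only: inner_diff_left inner_scaleR_left)
      have d: "(w \<times> B$m) \<bullet> (w \<times> x) = (w \<bullet> w) * (B$m \<bullet> x)" for m
        using dot_cross[of w "B$m" w x] wx by (simp add: inner_commute)
      from h have "u$i * ((w \<bullet> w) * (B$j \<bullet> x)) - u$j * ((w \<bullet> w) * (B$i \<bullet> x)) = 0"
        by (simp only: d)
      hence "(w \<bullet> w) * (u$i * (B$j \<bullet> x) - u$j * (B$i \<bullet> x)) = 0" by (simp add: algebra_simps)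
      thus ?thesis using ww by simp
    qed
    have "B *v x = (B$i0 \<bullet> x) *\<^sub>R u"
      by (simp add: vec_eq_iff mv_row) (metis rel ui0 mult_1 mult.commute)
    thus ?thesis unfolding B_def by blast
  qed
  have "x \<noteq> 0" using x0 x_def by simp
  thus ?thesis using Bx by blast
qed

lemma common3:
  fixes Q :: "real^3^3" and M :: "3 \<Rightarrow> real^3^3" and c :: "real^3"
  assumes Qs: "transpose Q = Q" and Qp: "\<forall>x. x \<noteq> 0 \<longrightarrow> x \<bullet> (Q *v x) > 0"
    and sM: "\<And>a. transpose (Q ** M a) = Q ** M a"
    and cM: "\<And>a b. M a ** M b = M b ** M a"
    and sum: "\<And>x. c$1 *\<^sub>R (M 1 *v x) + c$2 *\<^sub>R (M 2 *v x) + c$3 *\<^sub>R (M 3 *v x) = x"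
  shows "\<exists>x. x \<noteq> 0 \<and> (\<forall>a. \<exists>l. M a *v x = l *\<^sub>R x)"
proof -
  have ce: "\<exists>x. x \<noteq> 0 \<and> (\<exists>l. M a *v x = l *\<^sub>R x) \<and> (\<exists>l. M b *v x = l *\<^sub>R x)" for a b
    using common_eig[OF Qs Qp sM sM cM] by blast
  have all3: "\<forall>a. \<exists>l. M a *v x = l *\<^sub>R x" if "\<exists>l. M 1 *v x = l *\<^sub>R x" "\<exists>l. M 2 *v x = l *\<^sub>R x"
    "\<exists>l. M 3 *v x = l *\<^sub>R x" for x
    using that exhaust_3 by metis
  show ?thesis
  proof (cases "c$3 = 0")
    case False
    obtain x l1 l2 where x: "x \<noteq> 0" "M 1 *v x = l1 *\<^sub>R x" "M 2 *v x = l2 *\<^sub>R x" using ce[of 1 2] by blast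
    have "c$3 *\<^sub>R (M 3 *v x) = (1 - c$1 * l1 - c$2 * l2) *\<^sub>R x"
      using sum[of x] x by (simp add: algebra_simps)
    hence "M 3 *v x = ((1 - c$1 * l1 - c$2 * l2) / c$3) *\<^sub>R x" using False
      by (metis (no_types, lifting) divide_inverse_commute eq_vector_fraction_iff scaleR_scaleR)
    thus ?thesis using x all3[of x] by blast
  next
    case c3: True
    show ?thesis
    proof (cases "c$2 = 0")
      case False
      obtain x l1 l3 where x: "x \<noteq> 0" "M 1 *v x = l1 *\<^sub>R x" "M 3 *v x = l3 *\<^sub>R x" using ce[of 1 3] by blast
      have "c$2 *\<^sub>R (M 2 *v x) = (1 - c$1 * l1) *\<^sub>R x"
        using sum[of x] x c3 by (simp add: algebra_simps)
      hence "M 2 *v x = ((1 - c$1 * l1) / c$2) *\<^sub>R x" using False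
        by (metis (no_types, lifting) divide_inverse_commute eq_vector_fraction_iff scaleR_scaleR)
      thus ?thesis using x all3[of x] by blast
    next
      case c2: True
      obtain x l2 l3 where x: "x \<noteq> 0" "M 2 *v x = l2 *\<^sub>R x" "M 3 *v x = l3 *\<^sub>R x" using ce[of 2 3] by blast
      have h: "c$1 *\<^sub>R (M 1 *v x) = x" using sum[of x] c2 c3 by simp
      hence "c$1 \<noteq> 0" using x by auto
      hence "M 1 *v x = (1 / c$1) *\<^sub>R x" using h
        by (metis (no_types, lifting) divide_inverse_commute eq_vector_fraction_iff scaleR_scaleR mult_1)
      thus ?thesis using x all3[of x] by blast
    qed
  qed
qed



lemma ker_det0:
  fixes X :: "real^'n^'n"
  assumes "det X \<noteq> 0" "X *v x = 0"
  shows "x = 0"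
proof -
  obtain G where G: "G ** X = mat 1" using assms(1) invertible_det_nz[of X] unfolding invertible_def by blast
  have "x = (G ** X) *v x" by (simp add: G)
  also have "\<dots> = 0" by (simp add: assms(2) flip: matrix_vector_mul_assoc)
  finally show ?thesis .
qed

lemma posdef_det:
  fixes Q :: "real^'n^'n"
  assumes "\<forall>x. x \<noteq> 0 \<longrightarrow> x \<bullet> (Q *v x) > 0"
  shows "det Q \<noteq> 0"
proof
  assume "det Q = 0"
  then obtain v where "v \<noteq> 0" "Q *v v = 0" using det0_ker by blast
  thus False using assms by force
qed

lemma caseI:
  fixes R :: "3 \<Rightarrow> real^3^3" and P :: "real^3^3"
  assumes Ps: "transpose P = P" and Pp: "\<forall>x. x \<noteq> 0 \<longrightarrow> x \<bullet> (P *v x) > 0"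
    and E: "\<And>a b. R a ** P ** transpose (R b) = R b ** P ** transpose (R a)"
    and dA: "det (Rm R c) \<noteq> 0"
  shows "\<exists>t. t \<noteq> 0 \<and> (\<exists>w. \<forall>a. \<exists>s. R a *v t = s *\<^sub>R w)"
proof -
  define A where "A = Rm R c"
  have dA': "det A \<noteq> 0" "det (transpose A) \<noteq> 0" using dA by (simp_all add: A_def det_transpose)
  define Q where "Q = A ** P ** transpose A"
  have Qs: "transpose Q = Q" unfolding Q_def by (simp add: matrix_transpose_mul Ps matrix_mul_assoc)
  have Qp: "\<forall>x. x \<noteq> 0 \<longrightarrow> x \<bullet> (Q *v x) > 0"
  proof (intro allI impI)
    fix x :: "real^3" assume "x \<noteq> 0"
    hence "transpose A *v x \<noteq> 0" using ker_det0[OF dA'(2)] by blast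
    hence "(transpose A *v x) \<bullet> (P *v (transpose A *v x)) > 0" using Pp by blast
    moreover have "x \<bullet> (Q *v x) = (transpose A *v x) \<bullet> (P *v (transpose A *v x))"
      by (simp add: Q_def dot_lmul_matrix[symmetric] flip: matrix_vector_mul_assoc)
    ultimately show "x \<bullet> (Q *v x) > 0" by simp
  qed
  obtain G where G: "Q ** G = mat 1" "G ** Q = mat 1"
    using posdef_det[OF Qp] invertible_det_nz[of Q] unfolding invertible_def by blast
  obtain H where H: "transpose A ** H = mat 1" "H ** transpose A = mat 1"
    using dA'(2) invertible_det_nz[of "transpose A"] unfolding invertible_def by blast
  have key: "transpose A ** G ** A ** P = mat 1"
  proof -
    have "(transpose A ** G ** A ** P) ** transpose A = transpose A ** (G ** Q)"
      by (simp add: Q_def matrix_mul_assoc)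
    hence "(transpose A ** G ** A ** P) ** transpose A = transpose A" by (simp add: G)
    hence "(transpose A ** G ** A ** P) ** (transpose A ** H) = transpose A ** H"
      by (simp add: matrix_mul_assoc)
    thus ?thesis by (simp add: H)
  qed
  define N where "N a = R a ** P ** transpose A" for a
  have EA: "N a = A ** P ** transpose (R a)" for a
    using Bf_sym[of R P "axis a 1" c, OF E] unfolding N_def A_def Rm_axis .
  have Ns: "transpose (N a) = N a" for a
    by (simp add: N_def matrix_transpose_mul Ps matrix_mul_assoc EA[of a, unfolded N_def])
  define M where "M a = G ** N a" for a
  have QM: "Q ** M a = N a" for a by (simp add: M_def matrix_mul_assoc G)
  have NGN: "N a ** G ** N b = R a ** P ** transpose (R b)" for a b
  proof -
    have "N a ** G ** N b = (R a ** P ** transpose A) ** G ** (A ** P ** transpose (R b))"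
      using EA[of b] by (simp add: N_def[of a])
    also have "\<dots> = R a ** P ** (transpose A ** G ** A ** P) ** transpose (R b)"
      by (simp only: matrix_mul_assoc)
    finally have "N a ** G ** N b = R a ** P ** (transpose A ** G ** A ** P) ** transpose (R b)" .
    thus ?thesis by (simp add: key)
  qed
  have cM: "M a ** M b = M b ** M a" for a b
  proof -
    have "M a ** M b = G ** (N a ** G ** N b)" by (simp add: M_def matrix_mul_assoc)
    also have "\<dots> = G ** (N b ** G ** N a)" by (simp add: NGN E)
    also have "\<dots> = M b ** M a" by (simp add: M_def matrix_mul_assoc)
    finally show ?thesis .
  qed
  have sM: "transpose (Q ** M a) = Q ** M a" for a by (simp add: QM Ns)
  have sumN: "c$1 *\<^sub>R N 1 + c$2 *\<^sub>R N 2 + c$3 *\<^sub>R N 3 = Q"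
    by (simp add: N_def Q_def A_def Rm3 mm_radd mm_lscale)
  have sumM: "c$1 *\<^sub>R (M 1 *v x) + c$2 *\<^sub>R (M 2 *v x) + c$3 *\<^sub>R (M 3 *v x) = x" for x
  proof -
    have "c$1 *\<^sub>R (M 1 *v x) + c$2 *\<^sub>R (M 2 *v x) + c$3 *\<^sub>R (M 3 *v x)
       = (G ** (c$1 *\<^sub>R N 1 + c$2 *\<^sub>R N 2 + c$3 *\<^sub>R N 3)) *v x"
      by (simp add: M_def matrix_add_ldistrib mm_rscale matrix_vector_mult_add_rdistrib
          scaleR_matrix_vector_assoc)
    also have "\<dots> = x" by (simp add: sumN G)
    finally show ?thesis .
  qed
  obtain x where x: "x \<noteq> 0" "\<forall>a. \<exists>l. M a *v x = l *\<^sub>R x"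
    using common3[OF Qs Qp sM cM sumM] by blast
  define t where "t = P *v (transpose A *v x)"
  have t0: "t \<noteq> 0"
  proof
    assume "t = 0"
    hence "transpose A *v x = 0" using Pp unfolding t_def by force
    thus False using ker_det0[OF dA'(2)] x(1) by blast
  qed
  have "\<exists>s. R a *v t = s *\<^sub>R (A *v t)" for a
  proof -
    obtain l where l: "M a *v x = l *\<^sub>R x" using x(2) by blast
    have "R a *v t = N a *v x" by (simp add: t_def N_def flip: matrix_vector_mul_assoc)
    also have "\<dots> = Q *v (M a *v x)" by (simp add: QM matrix_vector_mul_assoc)
    also have "\<dots> = l *\<^sub>R (A *v t)"
      by (simp add: l matrix_vector_mult_scaleR Q_def t_def flip: matrix_vector_mul_assoc)
    finally show ?thesis by blast
  qed
  thus ?thesis using t0 by blast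
qed

lemma core:
  fixes R :: "3 \<Rightarrow> real^3^3" and P :: "real^3^3"
  assumes Ps: "transpose P = P" and Pp: "\<forall>x. x \<noteq> 0 \<longrightarrow> x \<bullet> (P *v x) > 0"
    and E: "\<And>a b. R a ** P ** transpose (R b) = R b ** P ** transpose (R a)"
    and inj: "\<And>t. (\<forall>a. R a *v t = 0) \<Longrightarrow> t = 0"
  shows "\<exists>t. t \<noteq> 0 \<and> (\<exists>w. \<forall>a. \<exists>s. R a *v t = s *\<^sub>R w)"
proof (cases "\<exists>c. det (Rm R c) \<noteq> 0")
  case True
  then obtain c where "det (Rm R c) \<noteq> 0" by blast
  from caseI[OF Ps Pp E this] show ?thesis .
next
  case nd: False
  show ?thesis
  proof (cases "\<exists>c. \<not> ((Rm R c)$2 \<times> (Rm R c)$3 = 0 \<and> (Rm R c)$3 \<times> (Rm R c)$1 = 0 \<and> (Rm R c)$1 \<times> (Rm R c)$2 = 0)")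
    case True
    then obtain c where c: "\<not> ((Rm R c)$2 \<times> (Rm R c)$3 = 0 \<and> (Rm R c)$3 \<times> (Rm R c)$1 = 0 \<and> (Rm R c)$1 \<times> (Rm R c)$2 = 0)"
      by blast
    have "\<And>d. det (Rm R d) = 0" using nd by blast
    from caseII[OF Pp E this c] show ?thesis .
  next
    case False
    have low: "(Rm R d)$i \<times> (Rm R d)$j = 0" for d i j
    proof -
      have h: "(Rm R d)$2 \<times> (Rm R d)$3 = 0" "(Rm R d)$3 \<times> (Rm R d)$1 = 0" "(Rm R d)$1 \<times> (Rm R d)$2 = 0"
        using False by blast+
      have h': "(Rm R d)$3 \<times> (Rm R d)$2 = 0" "(Rm R d)$1 \<times> (Rm R d)$3 = 0" "(Rm R d)$2 \<times> (Rm R d)$1 = 0"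
        using h by (metis cross_skew neg_equal_0_iff_equal)+
      show ?thesis using exhaust_3[of i] exhaust_3[of j] h h' by auto
    qed
    from caseIII[OF low inj] show ?thesis .
  qed
qed

lemma rank_one_rows:
  fixes X :: "real^3^3"
  assumes "\<forall>a. \<exists>s. X$a = s *\<^sub>R w" "X \<noteq> 0"
  shows "rank X = 1"
proof -
  have rowsX: "rows X = {X$i | i. True}" by (simp add: rows_def row_def vec_lambda_eta)
  have "X$i \<in> span {w}" for i
  proof -
    obtain s where "X$i = s *\<^sub>R w" using assms(1) by blast
    thus ?thesis by (simp add: span_scale span_base)
  qed
  hence "rows X \<subseteq> span {w}" unfolding rowsX by blast
  hence le: "dim (rows X) \<le> 1" using dim_le_card[of "rows X" "{w}"] by simp
  obtain i where "X$i \<noteq> 0" using assms(2) by (metis vec_eq_iff zero_index)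
  hence "\<not> rows X \<subseteq> {0}" unfolding rowsX by blast
  hence "dim (rows X) \<noteq> 0" by simp
  thus ?thesis using le unfolding row_rank_def by linarith
qed


unbundle no cross3_syntax


definition pm :: "((3 \<times> 3) \<times> (3 \<times> 3)) \<Rightarrow> real^3^3 \<Rightarrow> real^3^3 \<Rightarrow> real" where
  "pm idx X Y = (case idx of ((i1, i2), (j1, j2)) \<Rightarrow>
      (X$i1$j1 * Y$i2$j2 + Y$i1$j1 * X$i2$j2 - X$i1$j2 * Y$i2$j1 - Y$i1$j2 * X$i2$j1) / 2)"

definition fX :: "(3 \<Rightarrow> real^3^3) \<Rightarrow> real^3 \<Rightarrow> real^3^3" where
  "fX Xv t = (\<Sum>i\<in>UNIV. t$i *\<^sub>R Xv i)"

lemma fX3: "fX Xv t = t$1 *\<^sub>R Xv 1 + t$2 *\<^sub>R Xv 2 + t$3 *\<^sub>R Xv 3"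
  by (simp add: fX_def sum_3)

lemma minor_expand:
  "minor2 k (fX Xv t) = (\<Sum>i\<in>UNIV. \<Sum>j\<in>UNIV. t$i * t$j * pm k (Xv i) (Xv j))"
proof -
  obtain i1 i2 j1 j2 where k: "k = ((i1, i2), (j1, j2))" by (metis prod.collapse)
  show ?thesis unfolding k by (simp add: minor2_def pm_def fX3 sum_3 field_simps)
qed

lemma pm_sym: "pm k X Y = pm k Y X"
proof -
  obtain i1 i2 j1 j2 where k: "k = ((i1, i2), (j1, j2))" by (metis prod.collapse)
  show ?thesis unfolding k by (simp add: pm_def algebra_simps)
qed

lemma get_basis:
  fixes K :: "(real^3^3) set"
  assumes sK: "subspace K" and dK: "dim K = 3"
  obtains Xv :: "3 \<Rightarrow> real^3^3" where "\<And>t. fX Xv t \<in> K" "\<And>X. X \<in> K \<Longrightarrow> \<exists>t. X = fX Xv t"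
    "\<And>t. fX Xv t = 0 \<Longrightarrow> t = 0"
proof -
  obtain B where B: "B \<subseteq> K" "independent B" "K \<subseteq> span B" "card B = dim K" by (rule basis_exists)
  then obtain x y z where xyz: "B = {x, y, z}" "x \<noteq> y" "x \<noteq> z" "y \<noteq> z"
    using dK by (auto simp: card_3_iff)
  define Xv :: "3 \<Rightarrow> real^3^3" where "Xv i = (if i = 1 then x else if i = 2 then y else z)" for i
  have X: "Xv 1 = x" "Xv 2 = y" "Xv 3 = z" by (simp_all add: Xv_def)
  have fin: "finite B" using xyz by simp
  show ?thesis
  proof
    fix t
    show "fX Xv t \<in> K" using B(1) xyz
      by (simp add: fX3 X subspace_add[OF sK] subspace_scale[OF sK])
  next
    fix X assume "X \<in> K"
    hence "X \<in> span B" using B by blast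
    then obtain u where u: "X = (\<Sum>v\<in>B. u v *\<^sub>R v)" using span_finite[OF fin] by blast
    hence "X = u x *\<^sub>R x + u y *\<^sub>R y + u z *\<^sub>R z" using xyz by simp
    hence "X = fX Xv (vector [u x, u y, u z])" by (simp add: fX3 X)
    thus "\<exists>t. X = fX Xv t" by blast
  next
    fix t assume t: "fX Xv t = 0"
    show "t = 0"
    proof (rule ccontr)
      assume "t \<noteq> 0"
      define u where "u v = (if v = x then t$1 else if v = y then t$2 else t$3)" for v
      have uu: "u x = t$1" "u y = t$2" "u z = t$3" using xyz by (simp_all add: u_def)
      have "t$1 \<noteq> 0 \<or> t$2 \<noteq> 0 \<or> t$3 \<noteq> 0"
        using \<open>t \<noteq> 0\<close> by (simp add: vec_eq_iff forall_3)
      hence "\<exists>v\<in>B. u v \<noteq> 0" using uu xyz(1) by (metis insert_iff)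
      moreover have "(\<Sum>v\<in>B. u v *\<^sub>R v) = u x *\<^sub>R x + u y *\<^sub>R y + u z *\<^sub>R z"
        using xyz by simp
      hence "(\<Sum>v\<in>B. u v *\<^sub>R v) = 0"
        using t by (simp only: uu) (simp add: fX3 X)
      ultimately have "dependent B" using dependent_finite[OF fin] by blast
      thus False using B(2) by blast
    qed
  qed
qed



definition Sm :: "(3 \<Rightarrow> real^3^3) \<Rightarrow> (((3 \<times> 3) \<times> (3 \<times> 3)) \<Rightarrow> real) \<Rightarrow> real^3^3" where
  "Sm Xv \<beta> = (\<chi> i j. \<Sum>k\<in>minor_idx. \<beta> k * pm k (Xv i) (Xv j))"

lemma quad: "t \<bullet> (Sm Xv \<beta> *v t) = (\<Sum>k\<in>minor_idx. \<beta> k * minor2 k (fX Xv t))"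
  unfolding minor_expand
  by (simp add: Sm_def inner_vec_def matrix_vector_mult_def sum_3 sum_distrib_left sum_distrib_right
      sum.distrib algebra_simps)

definition outer :: "real^3 \<Rightarrow> real^3^3" where
  "outer v = (\<chi> i j. v$i * v$j)"

definition Rr :: "(3 \<Rightarrow> real^3^3) \<Rightarrow> 3 \<Rightarrow> real^3^3" where
  "Rr Xv a = (\<chi> m i. (Xv i)$a$m)"

lemma Rr_mv: "Rr Xv a *v t = (fX Xv t)$a"
  by (simp add: Rr_def fX3 matrix_vector_mult_def vec_eq_iff sum_3 algebra_simps)

lemma outer_mv: "outer v *v t = (v \<bullet> t) *\<^sub>R v"
  by (simp add: outer_def matrix_vector_mult_def vec_eq_iff inner_vec_def sum_distrib_left algebra_simps)

lemma a_outer: "a \<bullet> outer v = v \<bullet> (a *v v)"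
  by (simp add: outer_def matrix_vector_mult_def inner_vec_def sum_3 algebra_simps)

lemma axis_quad: "axis i 1 \<bullet> (S *v axis i 1) = S$i$i" for S :: "real^3^3"
  using exhaust_3[of i] by (auto simp: matrix_vector_mult_def inner_vec_def axis_def sum_3)

lemma conv_sub:
  assumes "x \<in> convex hull (outer ` sphere 0 1)"
  shows "(\<Sum>i\<in>UNIV. x$i$i) = 1 \<and> (\<forall>t. t \<bullet> (x *v t) \<ge> 0)"
proof -
  define D where "D = {Y :: real^3^3. (\<Sum>i\<in>UNIV. Y$i$i) = 1 \<and> (\<forall>t. t \<bullet> (Y *v t) \<ge> 0)}"
  have cD: "convex D" unfolding convex_def D_def
  proof (intro ballI allI impI, safe)
    fix Y Z :: "real^3^3" and u v :: real and t
    assume h: "0 \<le> u" "0 \<le> v" "u + v = 1" "(\<Sum>i\<in>UNIV. Y$i$i) = 1" "\<forall>t. t \<bullet> (Y *v t) \<ge> 0"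
      "(\<Sum>i\<in>UNIV. Z$i$i) = 1" "\<forall>t. t \<bullet> (Z *v t) \<ge> 0"
    show "(\<Sum>i\<in>UNIV. (u *\<^sub>R Y + v *\<^sub>R Z)$i$i) = 1"
      using h by (simp add: sum.distrib sum_distrib_left[symmetric])
    have "t \<bullet> ((u *\<^sub>R Y + v *\<^sub>R Z) *v t) = u * (t \<bullet> (Y *v t)) + v * (t \<bullet> (Z *v t))"
      by (simp add: matrix_vector_mult_add_rdistrib scaleR_matrix_vector_assoc[symmetric] inner_add_right)
    thus "0 \<le> t \<bullet> ((u *\<^sub>R Y + v *\<^sub>R Z) *v t)" using h by simp
  qed
  have gen: "outer ` sphere 0 1 \<subseteq> D"
  proof
    fix x assume "x \<in> outer ` sphere 0 1"
    then obtain v where v: "norm v = 1" "x = outer v" by auto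
    have "(\<Sum>i\<in>UNIV. x$i$i) = v \<bullet> v" by (simp add: v outer_def inner_vec_def power2_eq_square)
    also have "\<dots> = 1" using v(1) by (simp add: dot_square_norm)
    finally have "(\<Sum>i\<in>UNIV. x$i$i) = 1" .
    moreover have "t \<bullet> (x *v t) \<ge> 0" for t by (simp add: v outer_mv inner_commute)
    ultimately show "x \<in> D" unfolding D_def by blast
  qed
  have "convex hull (outer ` sphere 0 1) \<subseteq> D" using hull_minimal[of "outer ` sphere 0 1" D convex] gen cD by blast
  thus ?thesis using assms unfolding D_def by blast
qed

lemma compact_C: "compact (convex hull (outer ` sphere 0 1))"
proof -
  have "continuous_on UNIV outer" unfolding outer_def
    by (intro continuous_on_vec_lambda continuous_intros)
  hence "compact (outer ` sphere 0 1)"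
    by (intro compact_continuous_image) (auto intro: continuous_on_subset)
  thus ?thesis by (rule compact_convex_hull)
qed

lemma G_entry:
  "(Rr Xv a ** P ** transpose (Rr Xv b))$m$n = (\<Sum>i\<in>UNIV. \<Sum>j\<in>UNIV. (Xv i)$a$m * P$i$j * (Xv j)$b$n)"
proof -
  have "(Rr Xv a ** P ** transpose (Rr Xv b))$m$n = (\<Sum>j\<in>UNIV. (\<Sum>i\<in>UNIV. (Xv i)$a$m * P$i$j) * (Xv j)$b$n)"
    by (simp add: matrix_matrix_mult_def transpose_def Rr_def)
  also have "\<dots> = (\<Sum>j\<in>UNIV. \<Sum>i\<in>UNIV. (Xv i)$a$m * P$i$j * (Xv j)$b$n)"
    by (simp add: sum_distrib_right)
  also have "\<dots> = (\<Sum>i\<in>UNIV. \<Sum>j\<in>UNIV. (Xv i)$a$m * P$i$j * (Xv j)$b$n)"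
    by (rule sum.swap)
  finally show ?thesis .
qed

lemma swapP:
  fixes P :: "real^'n^'n"
  assumes Ps: "transpose P = P"
  shows "(\<Sum>i\<in>UNIV. \<Sum>j\<in>UNIV. f j * P$i$j * g i) = (\<Sum>i\<in>UNIV. \<Sum>j\<in>UNIV. f i * P$i$j * g j)"
proof -
  have p: "P$j$i = P$i$j" for i j using Ps by (metis transpose_def vec_lambda_beta)
  have "(\<Sum>i\<in>UNIV. \<Sum>j\<in>UNIV. f j * P$i$j * g i) = (\<Sum>j\<in>UNIV. \<Sum>i\<in>UNIV. f j * P$i$j * g i)"
    by (rule sum.swap)
  also have "\<dots> = (\<Sum>i\<in>UNIV. \<Sum>j\<in>UNIV. f i * P$i$j * g j)"
    by (simp add: p)
  finally show ?thesis .
qed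

lemma tc_entry:
  fixes P :: "real^3^3"
  assumes Ps: "transpose P = P"
  shows "(\<Sum>i\<in>UNIV. \<Sum>j\<in>UNIV. P$i$j * pm ((a,b),(m,n)) (Xv i) (Xv j))
     = (Rr Xv a ** P ** transpose (Rr Xv b))$m$n - (Rr Xv a ** P ** transpose (Rr Xv b))$n$m"
proof -
  define S where "S f g = (\<Sum>i\<in>UNIV. \<Sum>j\<in>UNIV. f i * P$i$j * g j)" for f g :: "3 \<Rightarrow> real"
  define x where "x i = (Xv i)$a$m" for i
  define y where "y i = (Xv i)$b$n" for i
  define p where "p i = (Xv i)$a$n" for i
  define q where "q i = (Xv i)$b$m" for i
  have "(\<Sum>i\<in>UNIV. \<Sum>j\<in>UNIV. P$i$j * pm ((a,b),(m,n)) (Xv i) (Xv j))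
     = (\<Sum>i\<in>UNIV. \<Sum>j\<in>UNIV. (x i * P$i$j * y j + x j * P$i$j * y i - p i * P$i$j * q j - p j * P$i$j * q i) / 2)"
    by (intro sum.cong refl) (simp add: pm_def x_def y_def p_def q_def field_simps)
  also have "\<dots> = (\<Sum>i\<in>UNIV. \<Sum>j\<in>UNIV. (x i * P$i$j * y j + x j * P$i$j * y i - p i * P$i$j * q j - p j * P$i$j * q i)) / 2"
    by (simp add: sum_divide_distrib)
  also have "\<dots> = (S x y + (\<Sum>i\<in>UNIV. \<Sum>j\<in>UNIV. x j * P$i$j * y i) - S p q - (\<Sum>i\<in>UNIV. \<Sum>j\<in>UNIV. p j * P$i$j * q i)) / 2"
    by (simp only: S_def sum.distrib sum_subtractf)
  also have "\<dots> = S x y - S p q" by (simp add: swapP[OF Ps] S_def)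
  finally show ?thesis unfolding G_entry S_def x_def y_def p_def q_def .
qed



lemma E_from_tc:
  fixes P :: "real^3^3"
  assumes Ps: "transpose P = P"
    and tc: "\<And>k. k \<in> minor_idx \<Longrightarrow> (\<Sum>i\<in>UNIV. \<Sum>j\<in>UNIV. P$i$j * pm k (Xv i) (Xv j)) = 0"
  shows "Rr Xv a ** P ** transpose (Rr Xv b) = Rr Xv b ** P ** transpose (Rr Xv a)"
proof -
  define G where "G a b = Rr Xv a ** P ** transpose (Rr Xv b)" for a b
  have tG: "transpose (G a b) = G b a" for a b
    by (simp add: G_def matrix_transpose_mul Ps matrix_mul_assoc)
  have lt: "(G a b)$m$n = (G a b)$n$m" if "a < b" "m < n" for a b m n
  proof -
    have "((a,b),(m,n)) \<in> minor_idx" using that by (simp add: minor_idx_def)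
    from tc[OF this] show ?thesis using tc_entry[OF Ps, of a b m n Xv] by (simp add: G_def)
  qed
  have lt2: "(G a b)$m$n = (G a b)$n$m" if "a < b" for a b m n
    using lt[OF that] linorder_less_linear[of m n] by metis
  have all: "(G a b)$m$n = (G a b)$n$m" for a b m n
  proof -
    consider "a < b" | "a = b" | "b < a" using linorder_less_linear by blast
    thus ?thesis
    proof cases
      case 1 thus ?thesis by (rule lt2)
    next
      case 2
      have t: "transpose (G a a) = G a a" using tG by simp
      have "(G a a)$m$n = (transpose (G a a))$m$n" by (simp only: t)
      also have "\<dots> = (G a a)$n$m" by (simp add: transpose_def)
      finally show ?thesis using 2 by simp
    next
      case 3
      have "(G a b)$m$n = (transpose (G b a))$m$n" using tG by simp
      also have "\<dots> = (G b a)$n$m" by (simp add: transpose_def)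
      also have "\<dots> = (G b a)$m$n" using lt2[OF 3] by simp
      also have "\<dots> = (transpose (G a b))$m$n" using tG by simp
      also have "\<dots> = (G a b)$n$m" by (simp add: transpose_def)
      finally show ?thesis .
    qed
  qed
  have "G a b = transpose (G a b)" using all by (simp add: vec_eq_iff transpose_def)
  thus ?thesis using tG by (simp add: G_def)
qed

lemma Sm_add: "Sm Xv (\<lambda>k. \<beta> k + \<gamma> k) = Sm Xv \<beta> + Sm Xv \<gamma>"
  by (simp add: Sm_def vec_eq_iff sum.distrib distrib_right)
lemma Sm_scale: "Sm Xv (\<lambda>k. c * \<beta> k) = c *\<^sub>R Sm Xv \<beta>"
  by (simp add: Sm_def vec_eq_iff sum_distrib_left mult.assoc)
lemma Sm_zero: "Sm Xv (\<lambda>k. 0) = 0"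
  by (simp add: Sm_def vec_eq_iff)
lemma Sm_delta:
  assumes "k \<in> minor_idx"
  shows "Sm Xv (\<lambda>k'. if k' = k then 1 else 0) = (\<chi> i j. pm k (Xv i) (Xv j))"
proof -
  have e: "(\<Sum>ka\<in>minor_idx. (if ka = k then 1 else 0) * g ka) = g k" for g :: "_ \<Rightarrow> real"
  proof -
    have "(\<Sum>ka\<in>minor_idx. (if ka = k then 1 else 0) * g ka) = (\<Sum>ka\<in>minor_idx. if ka = k then g ka else 0)"
      by (rule sum.cong) auto
    also have "\<dots> = g k" using assms by (simp add: sum.delta)
    finally show ?thesis .
  qed
  show ?thesis by (simp add: Sm_def vec_eq_iff e)
qed
lemma mv_neg: "(- A) *v x = - (A *v x)" for A :: "real^'n^'m"
  by (simp add: matrix_vector_mult_def vec_eq_iff sum_negf)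

lemma inner_mat: "a \<bullet> M = (\<Sum>i\<in>UNIV. \<Sum>j\<in>UNIV. a$i$j * M$i$j)" for a M :: "real^3^3"
  by (simp add: inner_vec_def)

theorem lemma8:
  fixes K :: "(real^3^3) set"
  assumes "subspace K"
    and "dim K = 3"
    and "\<not> has_rank1_connections K"
  shows "\<exists>\<beta> :: ((3 \<times> 3) \<times> (3 \<times> 3)) \<Rightarrow> real.
           (\<exists>k\<in>minor_idx. \<beta> k \<noteq> 0) \<and>
           (\<forall>X\<in>K. (\<Sum>k\<in>minor_idx. \<beta> k * minor2 k X) \<ge> 0) \<and>
           (\<exists>X\<in>K. (\<Sum>k\<in>minor_idx. \<beta> k * minor2 k X) \<noteq> 0)"
proof (rule ccontr)
  assume H: "\<not> ?thesis"
  obtain Xv where Xv: "\<And>t. fX Xv t \<in> K" "\<And>X. X \<in> K \<Longrightarrow> \<exists>t. X = fX Xv t"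
    "\<And>t. fX Xv t = 0 \<Longrightarrow> t = 0"
    using get_basis[OF assms(1,2)] by blast
  define C where "C = convex hull (outer ` sphere 0 1)"
  define L where "L = range (Sm Xv)"
  have disj: "L \<inter> C = {}"
  proof -
    have False if inC: "Sm Xv \<beta> \<in> C" for \<beta>
    proof -
      from conv_sub[OF inC[unfolded C_def]]
      have tr: "(\<Sum>i\<in>UNIV. (Sm Xv \<beta>)$i$i) = 1" and psd: "\<forall>t. t \<bullet> (Sm Xv \<beta> *v t) \<ge> 0" by auto
      have nn: "\<forall>X\<in>K. (\<Sum>k\<in>minor_idx. \<beta> k * minor2 k X) \<ge> 0"
      proof
        fix X assume "X \<in> K"
        then obtain t where "X = fX Xv t" using Xv(2) by blast
        moreover have "0 \<le> t \<bullet> (Sm Xv \<beta> *v t)" using psd by blast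
        ultimately show "(\<Sum>k\<in>minor_idx. \<beta> k * minor2 k X) \<ge> 0" using quad[of t Xv \<beta>] by simp
      qed
      obtain i where i: "(Sm Xv \<beta>)$i$i \<noteq> 0"
      proof (rule ccontr)
        assume "\<not> thesis"
        hence "\<forall>i. (Sm Xv \<beta>)$i$i = 0" using that by blast
        thus False using tr by simp
      qed
      have nz: "\<exists>X\<in>K. (\<Sum>k\<in>minor_idx. \<beta> k * minor2 k X) \<noteq> 0"
        using Xv(1)[of "axis i 1"] quad[of "axis i 1" Xv \<beta>] axis_quad[of i "Sm Xv \<beta>"] i by metis
      have "\<exists>k\<in>minor_idx. \<beta> k \<noteq> 0"
      proof (rule ccontr)
        assume "\<not> (\<exists>k\<in>minor_idx. \<beta> k \<noteq> 0)"
        hence "(Sm Xv \<beta>)$i$i = 0" by (simp add: Sm_def)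
        thus False using i by simp
      qed
      thus False using H nn nz by blast
    qed
    thus ?thesis unfolding L_def by blast
  qed
  have sL: "subspace L" unfolding subspace_def L_def
  proof (intro conjI ballI allI)
    show "0 \<in> range (Sm Xv)" using Sm_zero[of Xv] by (metis rangeI)
  next
    fix x y assume "x \<in> range (Sm Xv)" "y \<in> range (Sm Xv)"
    then obtain \<beta> \<gamma> where "x = Sm Xv \<beta>" "y = Sm Xv \<gamma>" by blast
    hence "x + y = Sm Xv (\<lambda>k. \<beta> k + \<gamma> k)" by (simp add: Sm_add)
    thus "x + y \<in> range (Sm Xv)" by (metis rangeI)
  next
    fix c x assume "x \<in> range (Sm Xv)"
    then obtain \<beta> where "x = Sm Xv \<beta>" by blast
    hence "c *\<^sub>R x = Sm Xv (\<lambda>k. c * \<beta> k)" by (simp add: Sm_scale)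
    thus "c *\<^sub>R x \<in> range (Sm Xv)" by (metis rangeI)
  qed
  have Cne: "C \<noteq> {}"
    unfolding C_def by (simp only: convex_hull_eq_empty image_is_empty sphere_eq_empty)
  obtain a b where ab: "\<forall>x\<in>C. a \<bullet> x < b" "\<forall>x\<in>L. a \<bullet> x > b"
    using separating_hyperplane_compact_closed[of C L] Cne disj
      convex_convex_hull compact_C subspace_imp_convex[OF sL] closed_subspace[OF sL]
    unfolding C_def by blast
  have b0: "b < 0" using ab(2) subspace_0[OF sL] by force
  have aL: "a \<bullet> x = 0" if "x \<in> L" for x
  proof (rule ccontr)
    assume ne: "a \<bullet> x \<noteq> 0"
    have "((b - 1) / (a \<bullet> x)) *\<^sub>R x \<in> L" using subspace_scale[OF sL that] .
    hence "a \<bullet> (((b - 1) / (a \<bullet> x)) *\<^sub>R x) > b" using ab(2) by blast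
    thus False using ne by simp
  qed
  have aout: "a \<bullet> outer v < 0" if "norm v = 1" for v
  proof -
    have "outer v \<in> C" unfolding C_def using that hull_subset by fastforce
    thus ?thesis using ab(1) b0 by force
  qed
  define P where "P = (-1::real) *\<^sub>R (a + transpose a)"
  have Ps: "transpose P = P" by (simp add: P_def transpose_def vec_eq_iff)
  have Pp: "\<forall>x. x \<noteq> 0 \<longrightarrow> x \<bullet> (P *v x) > 0"
  proof (intro allI impI)
    fix v :: "real^3" assume v0: "v \<noteq> 0"
    define u where "u = (1 / norm v) *\<^sub>R v"
    have nu: "norm u = 1" using v0 by (simp add: u_def)
    have vu: "v = norm v *\<^sub>R u" using v0 by (simp add: u_def)
    have "v \<bullet> (a *v v) = (norm v)^2 * (u \<bullet> (a *v u))"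
      by (subst (1 2) vu) (simp add: matrix_vector_mult_scaleR power2_eq_square)
    also have "\<dots> < 0" using aout[OF nu] v0 by (simp add: a_outer mult_pos_neg)
    finally have neg: "v \<bullet> (a *v v) < 0" .
    have "v \<bullet> (transpose a *v v) = v \<bullet> (a *v v)"
      by (simp add: inner_commute[of v "v v* a"] dot_lmul_matrix)
    hence "v \<bullet> (P *v v) = - 2 * (v \<bullet> (a *v v))"
      by (simp add: P_def mv_neg matrix_vector_mult_diff_rdistrib inner_diff_right)
    thus "v \<bullet> (P *v v) > 0" using neg by simp
  qed
  have tc: "(\<Sum>i\<in>UNIV. \<Sum>j\<in>UNIV. P$i$j * pm k (Xv i) (Xv j)) = 0" if k: "k \<in> minor_idx" for k
  proof -
    have "a \<bullet> Sm Xv (\<lambda>k'. if k' = k then 1 else 0) = 0" using aL unfolding L_def by blast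
    hence A1: "(\<Sum>i\<in>UNIV. \<Sum>j\<in>UNIV. a$i$j * pm k (Xv i) (Xv j)) = 0"
      by (simp add: Sm_delta[OF k] inner_mat)
    have "(\<Sum>i\<in>UNIV. \<Sum>j\<in>UNIV. a$j$i * pm k (Xv i) (Xv j))
        = (\<Sum>j\<in>UNIV. \<Sum>i\<in>UNIV. a$j$i * pm k (Xv i) (Xv j))" by (rule sum.swap)
    also have "\<dots> = (\<Sum>i\<in>UNIV. \<Sum>j\<in>UNIV. a$i$j * pm k (Xv i) (Xv j))"
      by (intro sum.cong refl) (metis pm_sym)
    finally have A2: "(\<Sum>i\<in>UNIV. \<Sum>j\<in>UNIV. a$j$i * pm k (Xv i) (Xv j)) = 0" using A1 by simp
    have "(\<Sum>i\<in>UNIV. \<Sum>j\<in>UNIV. P$i$j * pm k (Xv i) (Xv j))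
       = - ((\<Sum>i\<in>UNIV. \<Sum>j\<in>UNIV. a$i$j * pm k (Xv i) (Xv j)) + (\<Sum>i\<in>UNIV. \<Sum>j\<in>UNIV. a$j$i * pm k (Xv i) (Xv j)))"
      by (simp add: P_def transpose_def left_diff_distrib sum_subtractf sum_negf)
    thus ?thesis using A1 A2 by simp
  qed
  have E: "\<And>a b. Rr Xv a ** P ** transpose (Rr Xv b) = Rr Xv b ** P ** transpose (Rr Xv a)"
    using E_from_tc[OF Ps tc] by blast
  have inj: "t = 0" if "\<forall>a. Rr Xv a *v t = 0" for t
  proof -
    have "fX Xv t = 0" using that by (simp add: vec_eq_iff Rr_mv)
    thus ?thesis using Xv(3) by blast
  qed
  obtain t w where t: "t \<noteq> 0" "\<forall>a. \<exists>s. Rr Xv a *v t = s *\<^sub>R w"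
    using core[of P "Rr Xv", OF Ps Pp E inj] by blast
  define X where "X = fX Xv t"
  have X0: "X \<noteq> 0" using Xv(3)[of t] t(1) X_def by metis
  have "rank X = 1" using rank_one_rows[OF _ X0, of w] t(2) unfolding X_def by (simp add: Rr_mv)
  hence "has_rank1_connections K"
    unfolding has_rank1_connections_def using Xv(1)[of t] X_def X0 subspace_0[OF assms(1)]
    by (metis diff_zero)
  thus False using assms(3) by blast
qed


end
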